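(* Let $X$ be a bounded random vector in $\mathbb R^N$ with $\mathbb E(X)=0$, $Y$ a bounded real random variable, $m=\mathrm{Law}(X)$, and assume $\mathbb P(Y=\alpha+\beta\cdot X)=0$ for all $(\alpha,\beta)\in\mathbb R^{1+N}$. Assume quantile regression is under quasi-specification, i.e. there exist continuous maps $t\in[0,1]\mapsto(\alpha^{QR}(t),\beta^{QR}(t))\in\mathbb R\times\mathbb R^N$ such that for each $t\in[0,1]$ $$\mathbb P(Y>\alpha^{QR}(t)+\beta^{QR}(t)\cdot X)=1-t,\qquad \mathbb E\big(X\,\mathbf 1_{\{Y>\alpha^{QR}(t)+\beta^{QR}(t)\cdot X\}}\big)=0,$$ and for $m$-a.e. $x$, $t\mapsto\alpha^{QR}(t)+\beta^{QR}(t)\cdot x$ is increasing on $[0,1]$. Define $U_t^{QR}:=\mathbf 1_{\{Y>\alpha^{QR}(t)+\beta^{QR}(t)\cdot X\}}$ and $U^{QR}:=\int_0^1U_t^{QR}\,dt$. Then: $U^{QR}$ is uniformly distributed on $[0,1]$; $\mathbb E(X\mid U^{QR})=0$; $Y=\alpha^{QR}(U^{QR})+\beta^{QR}(U^{QR})\cdot X$ a.s.; and $U^{QR}$ solves $$\max\{\mathbb E(VY):\ \mathrm{Law}(V)=\mathrm{uniform}([0,1]),\ \mathbb E(X\mid V)=0\}.$$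
   Context: The conditions displayed on $(\alpha^{QR}(t),\beta^{QR}(t))$ are the first-order conditions of the Koenker–Bassett problem $\inf_{(\alpha,\beta)}\{\mathbb E((Y-\alpha-\beta\cdot X)_+)+(1-t)\alpha\}$. *)

theory Defs
  imports "HOL-Probability.Probability"
begin

definition QR_Ut :: "(real \<Rightarrow> real) \<Rightarrow> (real \<Rightarrow> real ^ 'n) \<Rightarrow> ('a \<Rightarrow> real ^ 'n) \<Rightarrow> ('a \<Rightarrow> real)
                      \<Rightarrow> real \<Rightarrow> 'a \<Rightarrow> real" where
  "QR_Ut \<alpha> \<beta> X Y t \<omega> = indicator {\<omega>. Y \<omega> > \<alpha> t + \<beta> t \<bullet> X \<omega>} \<omega>"

definition QR_U :: "(real \<Rightarrow> real) \<Rightarrow> (real \<Rightarrow> real ^ 'n) \<Rightarrow> ('a \<Rightarrow> real ^ 'n) \<Rightarrow> ('a \<Rightarrow> real)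
                     \<Rightarrow> 'a \<Rightarrow> real" where
  "QR_U \<alpha> \<beta> X Y \<omega> = (LINT t:{0..1}|lborel. QR_Ut \<alpha> \<beta> X Y t \<omega>)"

definition cond_exp_zero :: "'a measure \<Rightarrow> ('a \<Rightarrow> real ^ 'n) \<Rightarrow> ('a \<Rightarrow> real) \<Rightarrow> bool" where
  "cond_exp_zero M X V \<longleftrightarrow>
     (\<forall>i. AE \<omega> in M. real_cond_exp M (vimage_algebra (space M) V borel) (\<lambda>\<omega>. X \<omega> $ i) \<omega> = 0)"

definition uniform01 :: "'a measure \<Rightarrow> ('a \<Rightarrow> real) \<Rightarrow> bool" where
  "uniform01 M V \<longleftrightarrow> V \<in> borel_measurable M \<and> distr M lborel V = uniform_measure lborel {0..1}"

end

theory Submission imports Defs begin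

lemma aux_half: "\<not> 1 - t \<le> (p::real) \<Longrightarrow> t < 1 - (p + (1 - t))/2" by (simp add: field_simps)

locale qr = prob_space M for M :: "'a measure" +
  fixes X :: "'a \<Rightarrow> real ^ 'n" and Y :: "'a \<Rightarrow> real"
    and \<alpha> :: "real \<Rightarrow> real" and \<beta> :: "real \<Rightarrow> real ^ 'n"
  assumes Xm: "X \<in> borel_measurable M" and Ym: "Y \<in> borel_measurable M"
    and Xb: "\<exists>B. \<forall>\<omega>\<in>space M. norm (X \<omega>) \<le> B"
    and Yb: "\<exists>B. \<forall>\<omega>\<in>space M. \<bar>Y \<omega>\<bar> \<le> B"
    and EX: "integral\<^sup>L M X = 0"
    and ca: "continuous_on {0..1} \<alpha>" and cb: "continuous_on {0..1} \<beta>"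
    and PS: "\<forall>t\<in>{0..1}. measure M {\<omega>\<in>space M. Y \<omega> > \<alpha> t + \<beta> t \<bullet> X \<omega>} = 1 - t"
    and orth: "\<forall>t\<in>{0..1}. integral\<^sup>L M (\<lambda>\<omega>. QR_Ut \<alpha> \<beta> X Y t \<omega> *\<^sub>R X \<omega>) = 0"
    and mono: "AE x in distr M borel X. mono_on {0..1} (\<lambda>t. \<alpha> t + \<beta> t \<bullet> x)"
begin

declare Xm[measurable] Ym[measurable]

definition "L = restrict_space lborel {0..1::real}"
definition "clp (t::real) = max 0 (min 1 t)"
definition "ac t = \<alpha> (clp t)"
definition "bc t = \<beta> (clp t)"
definition "Uc t \<omega> = (if ac t + bc t \<bullet> X \<omega> < Y \<omega> then 1 else 0::real)"
definition "U = QR_U \<alpha> \<beta> X Y"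

lemma clp_cont: "continuous_on UNIV clp"
  unfolding clp_def by (intro continuous_intros)

lemma clp_in: "clp t \<in> {0..1}" unfolding clp_def by auto

lemma clp_id: "t \<in> {0..1} \<Longrightarrow> clp t = t" unfolding clp_def by auto

lemma ac_cont: "continuous_on UNIV ac"
  unfolding ac_def
  by (rule continuous_on_compose2[OF ca clp_cont]) (use clp_in in auto)

lemma bc_cont: "continuous_on UNIV bc"
  unfolding bc_def
  by (rule continuous_on_compose2[OF cb clp_cont]) (use clp_in in auto)

lemma ac_meas[measurable]: "ac \<in> borel_measurable borel"
  using ac_cont by (rule borel_measurable_continuous_onI)
lemma bc_meas[measurable]: "bc \<in> borel_measurable borel"
  using bc_cont by (rule borel_measurable_continuous_onI)

lemma sets_L: "sets L = sets (restrict_space borel {0..1})"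
  unfolding L_def by (simp add: sets_restrict_space)

lemma space_L[simp]: "space L = {0..1}"
  unfolding L_def by simp

lemma L_prob: "prob_space L"
  by (rule prob_spaceI) (simp add: L_def emeasure_restrict_space)

lemma fst_meas: "fst \<in> measurable (L \<Otimes>\<^sub>M M) borel"
proof -
  have a: "fst \<in> measurable (L \<Otimes>\<^sub>M M) L" by (rule measurable_fst)
  have b: "(\<lambda>x. x) \<in> measurable L borel"
    unfolding L_def by (rule measurable_restrict_space1) simp
  show ?thesis using measurable_comp[OF a b] by (simp add: comp_def)
qed

lemma Uc_meas[measurable]: "(\<lambda>p. Uc (fst p) (snd p)) \<in> borel_measurable (L \<Otimes>\<^sub>M M)"
proof -
  have h: "(\<lambda>p. if ac (fst p) + bc (fst p) \<bullet> X (snd p) < Y (snd p) then 1 else 0::real)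
     \<in> borel_measurable (borel \<Otimes>\<^sub>M M)"
  proof (rule measurable_If)
    show "{p\<in>space (borel \<Otimes>\<^sub>M M). ac (fst p) + bc (fst p) \<bullet> X (snd p) < Y (snd p)} \<in> sets (borel \<Otimes>\<^sub>M M)" by measurable
  qed auto
  have p: "(\<lambda>p. (fst p, snd p)) \<in> measurable (L \<Otimes>\<^sub>M M) (borel \<Otimes>\<^sub>M M)"
    by (intro measurable_Pair fst_meas measurable_snd)
  show ?thesis using measurable_comp[OF p h] unfolding Uc_def comp_def by simp
qed

lemma Uc_meas2[measurable]: "(\<lambda>\<omega>. Uc t \<omega>) \<in> borel_measurable M"
  unfolding Uc_def
proof (rule measurable_If)
  show "{\<omega>\<in>space M. ac t + bc t \<bullet> X \<omega> < Y \<omega>} \<in> sets M" by measurable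
qed auto

lemma U_eq: "U \<omega> = integral\<^sup>L L (\<lambda>t. Uc t \<omega>)"
proof -
  have "integral\<^sup>L L (\<lambda>t. Uc t \<omega>) = (LINT t:{0..1}|lborel. Uc t \<omega>)"
    unfolding L_def set_lebesgue_integral_def by (rule integral_restrict_space) simp
  also have "\<dots> = (LINT t:{0..1}|lborel. QR_Ut \<alpha> \<beta> X Y t \<omega>)"
    by (rule set_lebesgue_integral_cong) (simp_all add: Uc_def QR_Ut_def ac_def bc_def clp_id)
  finally show ?thesis unfolding U_def QR_U_def by simp
qed

lemma id_L: "(\<lambda>x. x) \<in> measurable L borel"
  unfolding L_def by (rule measurable_restrict_space1) simp

lemma ac_L[measurable]: "ac \<in> borel_measurable L"
  using measurable_comp[OF id_L ac_meas] by (simp add: comp_def)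
lemma bc_L[measurable]: "bc \<in> borel_measurable L"
  using measurable_comp[OF id_L bc_meas] by (simp add: comp_def)

lemma Uc_meas3[measurable]: "(\<lambda>t. Uc t \<omega>) \<in> borel_measurable L"
  unfolding Uc_def
proof (rule measurable_If)
  show "{t\<in>space L. ac t + bc t \<bullet> X \<omega> < Y \<omega>} \<in> sets L" by measurable
qed auto

lemma Uc_01: "0 \<le> Uc t \<omega>" "Uc t \<omega> \<le> 1"
  unfolding Uc_def by auto

lemma Uc_int: "integrable L (\<lambda>t. Uc t \<omega>)"
proof -
  interpret L: prob_space L by (rule L_prob)
  show ?thesis
    by (rule L.integrable_const_bound[where B=1]) (auto simp: Uc_def)
qed

lemma U_01: "0 \<le> U \<omega>" "U \<omega> \<le> 1"
proof -
  interpret L: prob_space L by (rule L_prob)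
  show "0 \<le> U \<omega>" unfolding U_eq by (rule Bochner_Integration.integral_nonneg) (simp add: Uc_01)
  have "U \<omega> \<le> integral\<^sup>L L (\<lambda>t. 1::real)" unfolding U_eq
    by (rule integral_mono[OF Uc_int]) (auto simp: Uc_01)
  then show "U \<omega> \<le> 1" using L.prob_space by simp
qed

lemma measL_atLeastAtMost: "t \<in> {0..1} \<Longrightarrow> measure L {0..t} = t"
  unfolding L_def by (simp add: measure_restrict_space)

lemma measL_atLeastLessThan: "t \<in> {0..1} \<Longrightarrow> measure L {0..<t} = t"
  unfolding L_def by (subst measure_restrict_space) auto



lemma setsL: "A \<subseteq> {0..1} \<Longrightarrow> A \<in> sets borel \<Longrightarrow> A \<in> sets L"
  unfolding L_def by (subst sets_restrict_space_iff) auto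

lemma good_AE: "AE \<omega> in M. mono_on {0..1} (\<lambda>t. \<alpha> t + \<beta> t \<bullet> X \<omega>)"
  using AE_distrD[OF Xm mono] .

lemma ac_eq: "t \<in> {0..1} \<Longrightarrow> ac t = \<alpha> t" unfolding ac_def by (simp add: clp_id)
lemma bc_eq: "t \<in> {0..1} \<Longrightarrow> bc t = \<beta> t" unfolding bc_def by (simp add: clp_id)

lemma key_a:
  assumes g: "mono_on {0..1} (\<lambda>t. \<alpha> t + \<beta> t \<bullet> X \<omega>)" and t: "t \<in> {0..1}"
    and lt: "\<alpha> t + \<beta> t \<bullet> X \<omega> < Y \<omega>"
  shows "t \<le> U \<omega>"
proof -
  interpret L: prob_space L by (rule L_prob)
  have "t = integral\<^sup>L L (indicator {0..t})"
    using t measL_atLeastAtMost[OF t] by simp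
  also have "\<dots> \<le> integral\<^sup>L L (\<lambda>s. Uc s \<omega>)"
  proof (rule integral_mono)
    show "integrable L (indicator {0..t} :: real \<Rightarrow> real)"
      using t by (intro integrable_real_indicator setsL) (auto simp: less_top[symmetric] L.emeasure_finite)
    show "integrable L (\<lambda>s. Uc s \<omega>)" by (rule Uc_int)
    fix s assume s: "s \<in> space L"
    show "indicator {0..t} s \<le> Uc s \<omega>"
    proof (cases "s \<le> t")
      case True
      then have "\<alpha> s + \<beta> s \<bullet> X \<omega> \<le> \<alpha> t + \<beta> t \<bullet> X \<omega>"
        using s t by (intro mono_onD[OF g]) auto
      then show ?thesis using lt s by (simp add: Uc_def ac_eq bc_eq)
    next
      case False then show ?thesis by (simp add: Uc_01)
    qed
  qed
  finally show ?thesis by (simp add: U_eq)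
qed

lemma key_b:
  assumes g: "mono_on {0..1} (\<lambda>t. \<alpha> t + \<beta> t \<bullet> X \<omega>)" and t: "t \<in> {0..1}"
    and le: "Y \<omega> \<le> \<alpha> t + \<beta> t \<bullet> X \<omega>"
  shows "U \<omega> \<le> t"
proof -
  interpret L: prob_space L by (rule L_prob)
  have "integral\<^sup>L L (\<lambda>s. Uc s \<omega>) \<le> integral\<^sup>L L (indicator {0..<t})"
  proof (rule integral_mono)
    show "integrable L (indicator {0..<t} :: real \<Rightarrow> real)"
      using t by (intro integrable_real_indicator setsL) (auto simp: less_top[symmetric] L.emeasure_finite)
    show "integrable L (\<lambda>s. Uc s \<omega>)" by (rule Uc_int)
    fix s assume s: "s \<in> space L"
    show "Uc s \<omega> \<le> indicator {0..<t} s"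
    proof (cases "s < t")
      case False
      then have "\<alpha> t + \<beta> t \<bullet> X \<omega> \<le> \<alpha> s + \<beta> s \<bullet> X \<omega>"
        using s t by (intro mono_onD[OF g]) auto
      then show ?thesis using le s False by (simp add: Uc_def ac_eq bc_eq)
    next
      case True then show ?thesis using s by (simp add: Uc_01)
    qed
  qed
  also have "\<dots> = t"
  proof -
    have "{0..<t} \<inter> {0..1} = {0..<t}" using t by auto
    then show ?thesis using t measL_atLeastLessThan[OF t] by simp
  qed
  finally show ?thesis by (simp add: U_eq)
qed

lemma snd_meas: "snd \<in> measurable (M \<Otimes>\<^sub>M L) borel"
proof -
  have a: "snd \<in> measurable (M \<Otimes>\<^sub>M L) L" by (rule measurable_snd)
  show ?thesis using measurable_comp[OF a id_L] by (simp add: comp_def)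
qed

lemma Uc_meas_swap: "(\<lambda>p. Uc (snd p) (fst p)) \<in> borel_measurable (M \<Otimes>\<^sub>M L)"
proof -
  have h: "(\<lambda>p. if ac (snd p) + bc (snd p) \<bullet> X (fst p) < Y (fst p) then 1 else 0::real)
     \<in> borel_measurable (M \<Otimes>\<^sub>M borel)"
  proof (rule measurable_If)
    show "{p\<in>space (M \<Otimes>\<^sub>M borel). ac (snd p) + bc (snd p) \<bullet> X (fst p) < Y (fst p)} \<in> sets (M \<Otimes>\<^sub>M borel)" by measurable
  qed auto
  have p: "(\<lambda>p. (fst p, snd p)) \<in> measurable (M \<Otimes>\<^sub>M L) (M \<Otimes>\<^sub>M borel)"
    by (intro measurable_Pair snd_meas measurable_fst)
  show ?thesis using measurable_comp[OF p h] unfolding Uc_def comp_def by simp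
qed

lemma U_meas[measurable]: "U \<in> borel_measurable M"
proof -
  interpret L: prob_space L by (rule L_prob)
  have "(\<lambda>\<omega>. integral\<^sup>L L (\<lambda>t. Uc t \<omega>)) \<in> borel_measurable M"
    by (rule L.borel_measurable_lebesgue_integral) (simp add: Uc_meas_swap[unfolded case_prod_beta'] case_prod_beta')
  moreover have "U = (\<lambda>\<omega>. integral\<^sup>L L (\<lambda>t. Uc t \<omega>))" by (rule ext) (rule U_eq)
  ultimately show ?thesis by simp
qed

lemma S_sets[measurable]: "{\<omega>\<in>space M. \<alpha> t + \<beta> t \<bullet> X \<omega> < Y \<omega>} \<in> sets M"
  by measurable

lemma P_gt: "t \<in> {0..1} \<Longrightarrow> prob {\<omega>\<in>space M. t < U \<omega>} \<le> 1 - t"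
proof -
  assume t: "t \<in> {0..1}"
  have "prob {\<omega>\<in>space M. t < U \<omega>} \<le> prob {\<omega>\<in>space M. \<alpha> t + \<beta> t \<bullet> X \<omega> < Y \<omega>}"
  proof (rule finite_measure_mono_AE[OF _ S_sets])
    show "AE x in M. x \<in> {\<omega> \<in> space M. t < U \<omega>} \<longrightarrow> x \<in> {\<omega> \<in> space M. \<alpha> t + \<beta> t \<bullet> X \<omega> < Y \<omega>}"
      using good_AE
    proof eventually_elim
      case (elim \<omega>) then show ?case using key_b[OF elim t] by force
    qed
  qed
  then show ?thesis using PS t by simp
qed

lemma P_ge: "t \<in> {0..1} \<Longrightarrow> 1 - t \<le> prob {\<omega>\<in>space M. t \<le> U \<omega>}"
proof -
  assume t: "t \<in> {0..1}"
  have "prob {\<omega>\<in>space M. \<alpha> t + \<beta> t \<bullet> X \<omega> < Y \<omega>} \<le> prob {\<omega>\<in>space M. t \<le> U \<omega>}"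
  proof (rule finite_measure_mono_AE)
    show "AE x in M. x \<in> {\<omega> \<in> space M. \<alpha> t + \<beta> t \<bullet> X \<omega> < Y \<omega>} \<longrightarrow> x \<in> {\<omega> \<in> space M. t \<le> U \<omega>}"
      using good_AE
    proof eventually_elim
      case (elim \<omega>) then show ?case using key_a[OF elim t] by force
    qed
  qed measurable
  then show ?thesis using PS t by simp
qed

lemma P_gt_eq: "t \<in> {0..1} \<Longrightarrow> prob {\<omega>\<in>space M. t < U \<omega>} = 1 - t"
proof -
  assume t: "t \<in> {0..1}"
  let ?p = "prob {\<omega>\<in>space M. t < U \<omega>}"
  have "1 - t \<le> ?p"
  proof (cases "t = 1")
    case True then show ?thesis by simp
  next
    case False
    show ?thesis
    proof (rule ccontr)
      assume "\<not> 1 - t \<le> ?p"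
      define s where "s = 1 - (?p + (1 - t)) / 2"
      have p0: "0 \<le> ?p" by simp
      have p1: "?p \<le> 1" by (rule prob_le_1)
      have s0: "0 \<le> s" "s \<le> 1" "t < s" using p0 p1 t \<open>\<not> 1 - t \<le> ?p\<close> unfolding s_def using aux_half[of t ?p] by auto
      then have s: "s \<in> {0..1}" "t < s" by auto
      have "1 - s \<le> prob {\<omega>\<in>space M. s \<le> U \<omega>}" by (rule P_ge[OF s(1)])
      also have "\<dots> \<le> ?p" by (rule finite_measure_mono) (use s in auto)
      finally show False using \<open>\<not> 1 - t \<le> ?p\<close> by (simp add: s_def)
    qed
  qed
  then show ?thesis using P_gt[OF t] by simp
qed

lemma UM_prob: "prob_space (uniform_measure lborel {0..1::real})"
  by (rule prob_space_uniform_measure) auto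

lemma measure_UM_Ioi: "measure (uniform_measure lborel {0..1::real}) {x<..} =
   (if x < 0 then 1 else if x \<le> 1 then 1 - x else 0)"
proof -
  have "measure (uniform_measure lborel {0..1::real}) {x<..} = measure lborel ({0..1} \<inter> {x<..})"
    by (subst measure_uniform_measure) auto
  also have "\<dots> = (if x < 0 then 1 else if x \<le> 1 then 1 - x else 0)"
  proof -
    consider "x < 0" | "0 \<le> x" "x \<le> 1" | "1 < x" by force
    then show ?thesis
    proof cases
      case 1
      then have "{0..1} \<inter> {x<..} = {0..1::real}" by auto
      then show ?thesis using 1 by simp
    next
      case 2
      then have "{0..1} \<inter> {x<..} = {x<..1::real}" by auto
      then show ?thesis using 2 by simp
    next
      case 3
      then have "{0..1} \<inter> {x<..} = ({}::real set)" by auto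
      then show ?thesis using 3 by simp
    qed
  qed
  finally show ?thesis .
qed

lemma U_gt_prob: "prob {\<omega>\<in>space M. x < U \<omega>} = (if x < 0 then 1 else if x \<le> 1 then 1 - x else 0)"
proof -
  consider "x < 0" | "0 \<le> x" "x \<le> 1" | "1 < x" by force
  then show ?thesis
  proof cases
    case 1
    then have "{\<omega>\<in>space M. x < U \<omega>} = space M" using U_01 by (auto intro: less_le_trans)
    then show ?thesis using 1 prob_space by simp
  next
    case 2
    then show ?thesis using P_gt_eq[of x] by simp
  next
    case 3
    have "\<not> x < U \<omega>" for \<omega> using U_01(2)[of \<omega>] 3 by linarith
    then have "{\<omega>\<in>space M. x < U \<omega>} = {}" by auto
    then have "prob {\<omega>\<in>space M. x < U \<omega>} = 0" by (simp only: measure_empty)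
    then show ?thesis using 3 by simp
  qed
qed

lemma U_distr: "distr M lborel U = uniform_measure lborel {0..1}"
proof (rule measure_eqI_lessThan)
  interpret D: prob_space "distr M lborel U" by (rule prob_space_distr) simp
  interpret UM: prob_space "uniform_measure lborel {0..1::real}" by (rule UM_prob)
  show "sets (distr M lborel U) = sets borel" by simp
  show "sets (uniform_measure lborel {0..1}) = sets borel" by simp
  fix x :: real
  show "emeasure (distr M lborel U) {x<..} < \<infinity>"
    using D.emeasure_finite by (simp add: less_top[symmetric])
  have "measure (distr M lborel U) {x<..} = prob (U -` {x<..} \<inter> space M)"
    by (rule measure_distr) simp_all
  also have "U -` {x<..} \<inter> space M = {\<omega>\<in>space M. x < U \<omega>}" by auto
  also have "prob \<dots> = measure (uniform_measure lborel {0..1}) {x<..}"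
    by (simp only: U_gt_prob measure_UM_Ioi)
  finally have "measure (distr M lborel U) {x<..} = measure (uniform_measure lborel {0..1}) {x<..}" .
  then show "emeasure (distr M lborel U) {x<..} = emeasure (uniform_measure lborel {0..1}) {x<..}"
    by (simp add: D.emeasure_eq_measure UM.emeasure_eq_measure)
qed

lemma U_uniform: "uniform01 M U"
  unfolding uniform01_def using U_meas U_distr by simp

lemma U_point_null: "prob {\<omega>\<in>space M. U \<omega> = c} = 0"
proof -
  have "prob {\<omega>\<in>space M. U \<omega> = c} = prob (U -` {c} \<inter> space M)"
    by (rule arg_cong[where f=prob]) auto
  also have "\<dots> = measure (distr M lborel U) {c}"
    by (rule measure_distr[symmetric]) simp_all
  also have "\<dots> = measure lborel ({0..1} \<inter> {c}) / measure lborel {0..1::real}"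
    unfolding U_distr by (subst measure_uniform_measure) auto
  also have "measure lborel ({0..1} \<inter> {c}) = 0"
    by (cases "c \<in> {0..1}") auto
  finally show ?thesis by simp
qed

lemma U_neq_AE: "AE \<omega> in M. U \<omega> \<noteq> c"
proof (subst AE_iff_measurable[OF _ refl])
  show "{\<omega>\<in>space M. \<not> U \<omega> \<noteq> c} \<in> sets M" by measurable
  show "emeasure M {\<omega>\<in>space M. \<not> U \<omega> \<noteq> c} = 0"
    using U_point_null[of c] by (simp add: emeasure_eq_measure)
qed

lemma Y_eq_AE: "AE \<omega> in M. Y \<omega> = \<alpha> (U \<omega>) + \<beta> (U \<omega>) \<bullet> X \<omega>"
  using good_AE U_neq_AE[of 0] U_neq_AE[of 1]
proof eventually_elim
  case (elim \<omega>)
  define u where "u = U \<omega>"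
  have u: "0 < u" "u < 1" using elim U_01[of \<omega>] unfolding u_def by auto
  define g where "g t = ac t + bc t \<bullet> X \<omega>" for t
  have gc: "continuous_on UNIV g" unfolding g_def
    by (intro continuous_intros ac_cont bc_cont)
  have c1: "closed {t. g t \<le> Y \<omega>}" by (rule closed_Collect_le[OF gc]) (rule continuous_on_const)
  have c2: "closed {t. Y \<omega> \<le> g t}" by (rule closed_Collect_le[OF _ gc]) (rule continuous_on_const)
  have s1: "{0..<u} \<subseteq> {t. g t \<le> Y \<omega>}"
  proof
    fix t assume t: "t \<in> {0..<u}"
    then have t01: "t \<in> {0..1}" using u by auto
    have "\<not> Y \<omega> \<le> \<alpha> t + \<beta> t \<bullet> X \<omega>"
      using key_b[OF elim(1) t01] t unfolding u_def by auto
    then show "t \<in> {t. g t \<le> Y \<omega>}" using t01 by (simp add: g_def ac_eq bc_eq)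
  qed
  have s2: "{u<..1} \<subseteq> {t. Y \<omega> \<le> g t}"
  proof
    fix t assume t: "t \<in> {u<..1}"
    then have t01: "t \<in> {0..1}" using u by auto
    have "\<not> \<alpha> t + \<beta> t \<bullet> X \<omega> < Y \<omega>"
      using key_a[OF elim(1) t01] t unfolding u_def by auto
    then show "t \<in> {t. Y \<omega> \<le> g t}" using t01 by (simp add: g_def ac_eq bc_eq)
  qed
  have "u \<in> closure {0..<u}" using u by simp
  then have "g u \<le> Y \<omega>" using closure_minimal[OF s1 c1] by auto
  moreover have "u \<in> closure {u<..1}" using u by simp
  then have "Y \<omega> \<le> g u" using closure_minimal[OF s2 c2] by auto
  ultimately have "Y \<omega> = g u" by simp
  then show ?case using u unfolding g_def u_def by (simp add: ac_eq bc_eq)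
qed

lemma X_bound: "\<exists>B. \<forall>\<omega>\<in>space M. norm (X \<omega>) \<le> B" by (rule Xb)

lemma Xi_meas[measurable]: "(\<lambda>\<omega>. X \<omega> $ i) \<in> borel_measurable M"
proof -
  have "(\<lambda>\<omega>. X \<omega> \<bullet> axis i 1) \<in> borel_measurable M" by measurable
  then show ?thesis by (simp add: inner_axis)
qed

lemma int_scaleR_X:
  fixes f :: "'a \<Rightarrow> real"
  assumes f: "f \<in> borel_measurable M" and fb: "\<And>\<omega>. \<omega> \<in> space M \<Longrightarrow> \<bar>f \<omega>\<bar> \<le> 1"
  shows "integrable M (\<lambda>\<omega>. f \<omega> *\<^sub>R X \<omega>)"
proof -
  obtain B where B: "\<forall>\<omega>\<in>space M. norm (X \<omega>) \<le> B" using Xb by blast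
  show ?thesis
  proof (rule integrable_const_bound[where B=B])
    show "AE \<omega> in M. norm (f \<omega> *\<^sub>R X \<omega>) \<le> B"
    proof (rule AE_I2)
      fix \<omega> assume w: "\<omega> \<in> space M"
      have "norm (f \<omega> *\<^sub>R X \<omega>) = \<bar>f \<omega>\<bar> * norm (X \<omega>)" by simp
      also have "\<dots> \<le> 1 * norm (X \<omega>)" using fb[OF w] by (intro mult_right_mono) auto
      also have "\<dots> \<le> B" using B w by simp
      finally show "norm (f \<omega> *\<^sub>R X \<omega>) \<le> B" .
    qed
  qed (use f in measurable)
qed

lemma int_mult_Xi:
  fixes f :: "'a \<Rightarrow> real"
  assumes f: "f \<in> borel_measurable M" and fb: "\<And>\<omega>. \<omega> \<in> space M \<Longrightarrow> \<bar>f \<omega>\<bar> \<le> 1"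
  shows "integrable M (\<lambda>\<omega>. f \<omega> * X \<omega> $ i)"
proof -
  obtain B where B: "\<forall>\<omega>\<in>space M. norm (X \<omega>) \<le> B" using Xb by blast
  show ?thesis
  proof (rule integrable_const_bound[where B=B])
    show "AE \<omega> in M. norm (f \<omega> * X \<omega> $ i) \<le> B"
    proof (rule AE_I2)
      fix \<omega> assume w: "\<omega> \<in> space M"
      have "norm (f \<omega> * X \<omega> $ i) = \<bar>f \<omega>\<bar> * \<bar>X \<omega> $ i\<bar>" by (simp add: abs_mult)
      also have "\<dots> \<le> 1 * norm (X \<omega>)" using fb[OF w] component_le_norm_cart[of "X \<omega>" i]
        by (intro mult_mono) auto
      also have "\<dots> \<le> B" using B w by simp
      finally show "norm (f \<omega> * X \<omega> $ i) \<le> B" .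
    qed
  qed (use f in measurable)
qed

lemma comp_int:
  assumes "integrable M (\<lambda>\<omega>. f \<omega> *\<^sub>R X \<omega>)"
  shows "integral\<^sup>L M (\<lambda>\<omega>. f \<omega> *\<^sub>R X \<omega>) $ i = integral\<^sup>L M (\<lambda>\<omega>. f \<omega> * X \<omega> $ i)"
proof -
  have "integral\<^sup>L M (\<lambda>\<omega>. f \<omega> *\<^sub>R X \<omega>) $ i = integral\<^sup>L M (\<lambda>\<omega>. f \<omega> *\<^sub>R X \<omega>) \<bullet> axis i 1"
    by (simp add: inner_axis)
  also have "\<dots> = integral\<^sup>L M (\<lambda>\<omega>. (f \<omega> *\<^sub>R X \<omega>) \<bullet> axis i 1)"
    using assms by (rule integral_inner_left[symmetric])
  also have "\<dots> = integral\<^sup>L M (\<lambda>\<omega>. f \<omega> * X \<omega> $ i)"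
    by (simp add: inner_axis)
  finally show ?thesis .
qed

lemma EXi0: "integral\<^sup>L M (\<lambda>\<omega>. X \<omega> $ i) = 0"
proof -
  have i: "integrable M (\<lambda>\<omega>. 1 *\<^sub>R X \<omega>)" by (rule int_scaleR_X) auto
  have "integral\<^sup>L M (\<lambda>\<omega>. 1 *\<^sub>R X \<omega>) $ i = integral\<^sup>L M (\<lambda>\<omega>. 1 * X \<omega> $ i)"
    by (rule comp_int[OF i])
  then show ?thesis using EX by simp
qed

lemma Uc_QR: "t \<in> {0..1} \<Longrightarrow> QR_Ut \<alpha> \<beta> X Y t \<omega> = Uc t \<omega>"
  by (simp add: QR_Ut_def Uc_def ac_eq bc_eq)

lemma orth_Uc: "t \<in> {0..1} \<Longrightarrow> integral\<^sup>L M (\<lambda>\<omega>. Uc t \<omega> *\<^sub>R X \<omega>) = 0"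
  using orth Uc_QR by simp

lemma orth_i: "t \<in> {0..1} \<Longrightarrow> integral\<^sup>L M (\<lambda>\<omega>. Uc t \<omega> * X \<omega> $ i) = 0"
proof -
  assume t: "t \<in> {0..1}"
  have i: "integrable M (\<lambda>\<omega>. Uc t \<omega> *\<^sub>R X \<omega>)" by (rule int_scaleR_X) (auto simp: Uc_def)
  show ?thesis using comp_int[OF i, of i] orth_Uc[OF t] by simp
qed

lemma Ioi_orth: "integral\<^sup>L M (\<lambda>\<omega>. indicator {x<..} (U \<omega>) * X \<omega> $ i) = 0"
proof -
  consider "x < 0" | "0 \<le> x" "x \<le> 1" | "1 < x" by force
  then show ?thesis
  proof cases
    case 1
    have "integral\<^sup>L M (\<lambda>\<omega>. indicator {x<..} (U \<omega>) * X \<omega> $ i) = integral\<^sup>L M (\<lambda>\<omega>. X \<omega> $ i)"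
    proof (rule Bochner_Integration.integral_cong[OF refl])
      fix \<omega> show "indicator {x<..} (U \<omega>) * X \<omega> $ i = X \<omega> $ i"
        using U_01(1)[of \<omega>] 1 by (simp add: indicator_def)
    qed
    then show ?thesis using EXi0 by simp
  next
    case 3
    have "integral\<^sup>L M (\<lambda>\<omega>. indicator {x<..} (U \<omega>) * X \<omega> $ i) = integral\<^sup>L M (\<lambda>\<omega>. 0)"
    proof (rule Bochner_Integration.integral_cong[OF refl])
      fix \<omega> show "indicator {x<..} (U \<omega>) * X \<omega> $ i = 0"
        using U_01(2)[of \<omega>] 3 by (simp add: indicator_def)
    qed
    then show ?thesis by simp
  next
    case 2
    then have x: "x \<in> {0..1}" by simp
    have "integral\<^sup>L M (\<lambda>\<omega>. indicator {x<..} (U \<omega>) * X \<omega> $ i) = integral\<^sup>L M (\<lambda>\<omega>. Uc x \<omega> * X \<omega> $ i)"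
    proof (rule integral_cong_AE)
      show "AE \<omega> in M. indicator {x<..} (U \<omega>) * X \<omega> $ i = Uc x \<omega> * X \<omega> $ i"
        using good_AE U_neq_AE[of x]
      proof eventually_elim
        case (elim \<omega>)
        show ?case
        proof (cases "x < U \<omega>")
          case True
          then have "\<not> Y \<omega> \<le> \<alpha> x + \<beta> x \<bullet> X \<omega>" using key_b[OF elim(1) x] by auto
          then show ?thesis using True x by (simp add: Uc_def ac_eq bc_eq)
        next
          case False
          then have "U \<omega> < x" using elim(2) by auto
          then have "\<not> \<alpha> x + \<beta> x \<bullet> X \<omega> < Y \<omega>" using key_a[OF elim(1) x] by auto
          then show ?thesis using False x by (simp add: Uc_def ac_eq bc_eq)
        qed
      qed
    qed measurable
    then show ?thesis using orth_i[OF x] by simp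
  qed
qed

lemma ind_U_meas[measurable]: "B \<in> sets borel \<Longrightarrow> (\<lambda>\<omega>. indicator B (U \<omega>) :: real) \<in> borel_measurable M"
  using measurable_comp[OF U_meas borel_measurable_indicator[of B borel]] by (simp add: comp_def)

lemma Bset_orth:
  assumes B: "B \<in> sets borel"
  shows "integral\<^sup>L M (\<lambda>\<omega>. indicator B (U \<omega>) * X \<omega> $ i) = 0"
proof -
  define P where "P \<omega> = max 0 (X \<omega> $ i)" for \<omega>
  define N where "N \<omega> = max 0 (- (X \<omega> $ i))" for \<omega>
  have [measurable]: "P \<in> borel_measurable M" "N \<in> borel_measurable M"
    unfolding P_def N_def by measurable
  obtain Bd where Bd: "\<forall>\<omega>\<in>space M. norm (X \<omega>) \<le> Bd" using Xb by blast
  have intg: "integrable M (\<lambda>\<omega>. indicator C (U \<omega>) * h \<omega>)"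
    if C: "C \<in> sets borel" and h: "h \<in> borel_measurable M" "\<And>\<omega>. \<bar>h \<omega>\<bar> \<le> \<bar>X \<omega> $ i\<bar>" for C h
  proof (rule integrable_const_bound[where B=Bd])
    show "AE \<omega> in M. norm (indicator C (U \<omega>) * h \<omega>) \<le> Bd"
    proof (rule AE_I2)
      fix \<omega> assume w: "\<omega> \<in> space M"
      have "norm (indicator C (U \<omega>) * h \<omega>) \<le> \<bar>h \<omega>\<bar>" by (simp add: indicator_def abs_mult)
      also have "\<dots> \<le> norm (X \<omega>)" using h(2)[of \<omega>] component_le_norm_cart[of "X \<omega>" i] by simp
      also have "\<dots> \<le> Bd" using Bd w by simp
      finally show "norm (indicator C (U \<omega>) * h \<omega>) \<le> Bd" .
    qed
  qed (use C h in measurable)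
  have intP: "integrable M (\<lambda>\<omega>. indicator C (U \<omega>) * P \<omega>)" if "C \<in> sets borel" for C
    by (rule intg[OF that]) (auto simp: P_def)
  have intN: "integrable M (\<lambda>\<omega>. indicator C (U \<omega>) * N \<omega>)" if "C \<in> sets borel" for C
    by (rule intg[OF that]) (auto simp: N_def)
  have diff: "integral\<^sup>L M (\<lambda>\<omega>. indicator C (U \<omega>) * X \<omega> $ i) =
     integral\<^sup>L M (\<lambda>\<omega>. indicator C (U \<omega>) * P \<omega>) - integral\<^sup>L M (\<lambda>\<omega>. indicator C (U \<omega>) * N \<omega>)"
    if C: "C \<in> sets borel" for C
  proof -
    have "integral\<^sup>L M (\<lambda>\<omega>. indicator C (U \<omega>) * X \<omega> $ i) =
       integral\<^sup>L M (\<lambda>\<omega>. indicator C (U \<omega>) * P \<omega> - indicator C (U \<omega>) * N \<omega>)"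
      by (rule Bochner_Integration.integral_cong[OF refl]) (auto simp: P_def N_def indicator_def)
    also have "\<dots> = integral\<^sup>L M (\<lambda>\<omega>. indicator C (U \<omega>) * P \<omega>) - integral\<^sup>L M (\<lambda>\<omega>. indicator C (U \<omega>) * N \<omega>)"
      by (rule Bochner_Integration.integral_diff[OF intP[OF C] intN[OF C]])
    finally show ?thesis .
  qed
  have emP: "emeasure (distr (density M (\<lambda>\<omega>. ennreal (h \<omega>))) borel U) C
      = ennreal (integral\<^sup>L M (\<lambda>\<omega>. indicator C (U \<omega>) * h \<omega>))"
    if C: "C \<in> sets borel" and h: "h \<in> borel_measurable M" "\<And>\<omega>. 0 \<le> h \<omega>"
       and hi: "integrable M (\<lambda>\<omega>. indicator C (U \<omega>) * h \<omega>)" for C h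
  proof -
    have "emeasure (distr (density M (\<lambda>\<omega>. ennreal (h \<omega>))) borel U) C
        = emeasure (density M (\<lambda>\<omega>. ennreal (h \<omega>))) (U -` C \<inter> space M)"
      by (subst emeasure_distr) (use C h in auto)
    also have "\<dots> = (\<integral>\<^sup>+\<omega>. ennreal (h \<omega>) * indicator (U -` C \<inter> space M) \<omega> \<partial>M)"
      by (subst emeasure_density) (use C h in auto)
    also have "\<dots> = (\<integral>\<^sup>+\<omega>. ennreal (indicator C (U \<omega>) * h \<omega>) \<partial>M)"
      by (rule nn_integral_cong) (auto simp: indicator_def)
    also have "\<dots> = ennreal (integral\<^sup>L M (\<lambda>\<omega>. indicator C (U \<omega>) * h \<omega>))"
      by (rule nn_integral_eq_integral[OF hi]) (auto simp: h(2))
    finally show ?thesis .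
  qed
  have eP: "emeasure (distr (density M (\<lambda>\<omega>. ennreal (P \<omega>))) borel U) C
      = ennreal (integral\<^sup>L M (\<lambda>\<omega>. indicator C (U \<omega>) * P \<omega>))" if "C \<in> sets borel" for C
    by (rule emP[OF that _ _ intP[OF that]]) (auto simp: P_def)
  have eN: "emeasure (distr (density M (\<lambda>\<omega>. ennreal (N \<omega>))) borel U) C
      = ennreal (integral\<^sup>L M (\<lambda>\<omega>. indicator C (U \<omega>) * N \<omega>))" if "C \<in> sets borel" for C
    by (rule emP[OF that _ _ intN[OF that]]) (auto simp: N_def)
  have eq: "distr (density M (\<lambda>\<omega>. ennreal (P \<omega>))) borel U = distr (density M (\<lambda>\<omega>. ennreal (N \<omega>))) borel U"
  proof (rule measure_eqI_lessThan)
    fix x :: real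
    show "emeasure (distr (density M (\<lambda>\<omega>. ennreal (P \<omega>))) borel U) {x<..} < \<infinity>"
      by (simp add: eP)
    have "integral\<^sup>L M (\<lambda>\<omega>. indicator {x<..} (U \<omega>) * P \<omega>) = integral\<^sup>L M (\<lambda>\<omega>. indicator {x<..} (U \<omega>) * N \<omega>)"
      using diff[of "{x<..}"] Ioi_orth[of x i] by simp
    then show "emeasure (distr (density M (\<lambda>\<omega>. ennreal (P \<omega>))) borel U) {x<..} =
      emeasure (distr (density M (\<lambda>\<omega>. ennreal (N \<omega>))) borel U) {x<..}"
      by (simp add: eP eN)
  qed simp_all
  have "ennreal (integral\<^sup>L M (\<lambda>\<omega>. indicator B (U \<omega>) * P \<omega>)) = ennreal (integral\<^sup>L M (\<lambda>\<omega>. indicator B (U \<omega>) * N \<omega>))"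
    using eP[OF B] eN[OF B] eq by simp
  moreover have "0 \<le> integral\<^sup>L M (\<lambda>\<omega>. indicator B (U \<omega>) * P \<omega>)"
    by (rule Bochner_Integration.integral_nonneg) (auto simp: P_def)
  moreover have "0 \<le> integral\<^sup>L M (\<lambda>\<omega>. indicator B (U \<omega>) * N \<omega>)"
    by (rule Bochner_Integration.integral_nonneg) (auto simp: N_def)
  ultimately show ?thesis using diff[OF B] by simp
qed

lemma subalg_vimage: "V \<in> borel_measurable M \<Longrightarrow> subalgebra M (vimage_algebra (space M) V borel)"
  unfolding subalgebra_def using measurable_iff_sets[of V M borel] by auto

lemma fm: "finite_measure M"
  by (rule finite_measureI) simp

lemma U_cond: "cond_exp_zero M X U"
  unfolding cond_exp_zero_def
proof
  fix i
  define F where "F = vimage_algebra (space M) U borel"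
  interpret FS: finite_measure_subalgebra M F
    by (intro finite_measure_subalgebra.intro finite_measure_subalgebra_axioms.intro fm)
       (simp add: F_def subalg_vimage)
  have "AE \<omega> in M. real_cond_exp M F (\<lambda>\<omega>. X \<omega> $ i) \<omega> = (\<lambda>_. 0) \<omega>"
  proof (rule FS.real_cond_exp_charact)
    fix A assume A: "A \<in> sets F"
    then obtain B where B: "B \<in> sets borel" "A = U -` B \<inter> space M"
      unfolding F_def by (subst (asm) sets_vimage_algebra2) auto
    have "(\<integral>\<omega>\<in>A. X \<omega> $ i \<partial>M) = integral\<^sup>L M (\<lambda>\<omega>. indicator B (U \<omega>) * X \<omega> $ i)"
      unfolding set_lebesgue_integral_def B(2)
      by (rule Bochner_Integration.integral_cong[OF refl]) (auto simp: indicator_def)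
    also have "\<dots> = 0" by (rule Bset_orth[OF B(1)])
    finally show "(\<integral>\<omega>\<in>A. X \<omega> $ i \<partial>M) = (\<integral>\<omega>\<in>A. (\<lambda>_. 0::real) \<omega> \<partial>M)"
      by (simp add: set_lebesgue_integral_def)
  next
    show "integrable M (\<lambda>\<omega>. X \<omega> $ i)" using int_mult_Xi[of "\<lambda>_. 1" i] by simp
  qed simp_all
  then show "AE \<omega> in M. real_cond_exp M (vimage_algebra (space M) U borel) (\<lambda>\<omega>. X \<omega> $ i) \<omega> = 0"
    by (simp add: F_def)
qed

lemma Y_bound_int:
  fixes f :: "'a \<Rightarrow> real"
  assumes f: "f \<in> borel_measurable M" and fb: "\<And>\<omega>. \<omega> \<in> space M \<Longrightarrow> \<bar>f \<omega>\<bar> \<le> 1"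
  shows "integrable M (\<lambda>\<omega>. f \<omega> * Y \<omega>)"
proof -
  obtain B where B: "\<forall>\<omega>\<in>space M. \<bar>Y \<omega>\<bar> \<le> B" using Yb by blast
  show ?thesis
  proof (rule integrable_const_bound[where B=B])
    show "AE \<omega> in M. norm (f \<omega> * Y \<omega>) \<le> B"
    proof (rule AE_I2)
      fix \<omega> assume w: "\<omega> \<in> space M"
      have "norm (f \<omega> * Y \<omega>) = \<bar>f \<omega>\<bar> * \<bar>Y \<omega>\<bar>" by (simp add: abs_mult)
      also have "\<dots> \<le> 1 * \<bar>Y \<omega>\<bar>" using fb[OF w] by (intro mult_right_mono) auto
      also have "\<dots> \<le> B" using B w by simp
      finally show "norm (f \<omega> * Y \<omega>) \<le> B" .
    qed
  qed (use f in measurable)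
qed

lemma f_int:
  fixes f :: "'a \<Rightarrow> real"
  assumes f: "f \<in> borel_measurable M" and fb: "\<And>\<omega>. \<omega> \<in> space M \<Longrightarrow> \<bar>f \<omega>\<bar> \<le> 1"
  shows "integrable M f"
  by (rule integrable_const_bound[where B=1]) (use f fb in auto)

lemma lin_int:
  fixes f :: "'a \<Rightarrow> real"
  assumes f: "f \<in> borel_measurable M" and fb: "\<And>\<omega>. \<omega> \<in> space M \<Longrightarrow> \<bar>f \<omega>\<bar> \<le> 1"
  shows "integrable M (\<lambda>\<omega>. f \<omega> * (a + b \<bullet> X \<omega>))"
    and "integral\<^sup>L M (\<lambda>\<omega>. f \<omega> * (a + b \<bullet> X \<omega>)) = a * integral\<^sup>L M f + b \<bullet> integral\<^sup>L M (\<lambda>\<omega>. f \<omega> *\<^sub>R X \<omega>)"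
proof -
  have e: "(\<lambda>\<omega>. f \<omega> * (a + b \<bullet> X \<omega>)) = (\<lambda>\<omega>. a * f \<omega> + b \<bullet> (f \<omega> *\<^sub>R X \<omega>))"
    by (rule ext) (simp add: algebra_simps)
  have i1: "integrable M (\<lambda>\<omega>. a * f \<omega>)" using f_int[OF f fb] by simp
  have i2: "integrable M (\<lambda>\<omega>. b \<bullet> (f \<omega> *\<^sub>R X \<omega>))" by (rule integrable_inner_right) (rule int_scaleR_X[OF f fb])
  show "integrable M (\<lambda>\<omega>. f \<omega> * (a + b \<bullet> X \<omega>))" unfolding e by (rule Bochner_Integration.integrable_add[OF i1 i2])
  have "integral\<^sup>L M (\<lambda>\<omega>. a * f \<omega> + b \<bullet> (f \<omega> *\<^sub>R X \<omega>)) = integral\<^sup>L M (\<lambda>\<omega>. a * f \<omega>) + integral\<^sup>L M (\<lambda>\<omega>. b \<bullet> (f \<omega> *\<^sub>R X \<omega>))"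
    by (rule Bochner_Integration.integral_add[OF i1 i2])
  also have "integral\<^sup>L M (\<lambda>\<omega>. a * f \<omega>) = a * integral\<^sup>L M f" by (rule integral_mult_right_zero)
  also have "integral\<^sup>L M (\<lambda>\<omega>. b \<bullet> (f \<omega> *\<^sub>R X \<omega>)) = b \<bullet> integral\<^sup>L M (\<lambda>\<omega>. f \<omega> *\<^sub>R X \<omega>)"
    by (rule integral_inner_right) (rule int_scaleR_X[OF f fb])
  finally show "integral\<^sup>L M (\<lambda>\<omega>. f \<omega> * (a + b \<bullet> X \<omega>)) = a * integral\<^sup>L M f + b \<bullet> integral\<^sup>L M (\<lambda>\<omega>. f \<omega> *\<^sub>R X \<omega>)"
    unfolding e .
qed

lemma split_int:
  fixes f :: "'a \<Rightarrow> real"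
  assumes f: "f \<in> borel_measurable M" and fb: "\<And>\<omega>. \<omega> \<in> space M \<Longrightarrow> \<bar>f \<omega>\<bar> \<le> 1"
  shows "integrable M (\<lambda>\<omega>. f \<omega> * (Y \<omega> - (a + b \<bullet> X \<omega>)))"
    and "integral\<^sup>L M (\<lambda>\<omega>. f \<omega> * Y \<omega>) = integral\<^sup>L M (\<lambda>\<omega>. f \<omega> * (Y \<omega> - (a + b \<bullet> X \<omega>))) + integral\<^sup>L M (\<lambda>\<omega>. f \<omega> * (a + b \<bullet> X \<omega>))"
proof -
  have e: "(\<lambda>\<omega>. f \<omega> * (Y \<omega> - (a + b \<bullet> X \<omega>))) = (\<lambda>\<omega>. f \<omega> * Y \<omega> - f \<omega> * (a + b \<bullet> X \<omega>))"
    by (rule ext) (simp add: algebra_simps)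
  show i: "integrable M (\<lambda>\<omega>. f \<omega> * (Y \<omega> - (a + b \<bullet> X \<omega>)))"
    unfolding e using Y_bound_int[OF f fb] lin_int(1)[OF f fb] by simp
  have "integral\<^sup>L M (\<lambda>\<omega>. f \<omega> * (Y \<omega> - (a + b \<bullet> X \<omega>))) = integral\<^sup>L M (\<lambda>\<omega>. f \<omega> * Y \<omega>) - integral\<^sup>L M (\<lambda>\<omega>. f \<omega> * (a + b \<bullet> X \<omega>))"
    unfolding e by (rule Bochner_Integration.integral_diff[OF Y_bound_int[OF f fb] lin_int(1)[OF f fb]])
  then show "integral\<^sup>L M (\<lambda>\<omega>. f \<omega> * Y \<omega>) = integral\<^sup>L M (\<lambda>\<omega>. f \<omega> * (Y \<omega> - (a + b \<bullet> X \<omega>))) + integral\<^sup>L M (\<lambda>\<omega>. f \<omega> * (a + b \<bullet> X \<omega>))"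
    by simp
qed

lemma V_meas: "uniform01 M V \<Longrightarrow> V \<in> borel_measurable M"
  unfolding uniform01_def by simp

lemma V_prob_gt:
  assumes V: "uniform01 M V" and t: "t \<in> {0..1}"
  shows "prob {\<omega>\<in>space M. t < V \<omega>} = 1 - t"
proof -
  have Vm: "V \<in> borel_measurable M" and D: "distr M lborel V = uniform_measure lborel {0..1}"
    using V unfolding uniform01_def by auto
  have "prob {\<omega>\<in>space M. t < V \<omega>} = prob (V -` {t<..} \<inter> space M)"
    by (rule arg_cong[where f=prob]) auto
  also have "\<dots> = measure (distr M lborel V) {t<..}"
    by (rule measure_distr[symmetric]) (use Vm in simp_all)
  also have "\<dots> = 1 - t" unfolding D measure_UM_Ioi using t by simp
  finally show ?thesis .
qed

lemma ind_V_int: "integral\<^sup>L M (\<lambda>\<omega>. indicator {t<..} (V \<omega>) :: real) = prob {\<omega>\<in>space M. t < V \<omega>}"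
proof -
  have "integral\<^sup>L M (\<lambda>\<omega>. indicator {t<..} (V \<omega>) :: real) = integral\<^sup>L M (indicator {\<omega>\<in>space M. t < V \<omega>})"
    by (rule Bochner_Integration.integral_cong[OF refl]) (auto simp: indicator_def)
  also have "\<dots> = prob {\<omega>\<in>space M. t < V \<omega>}"
    by simp (metis (no_types, lifting) Int_absorb2 mem_Collect_eq subsetI)
  finally show ?thesis .
qed

lemma Uc_int_M: "t \<in> {0..1} \<Longrightarrow> integral\<^sup>L M (\<lambda>\<omega>. Uc t \<omega>) = 1 - t"
proof -
  assume t: "t \<in> {0..1}"
  have "integral\<^sup>L M (\<lambda>\<omega>. Uc t \<omega>) = integral\<^sup>L M (indicator {\<omega>\<in>space M. \<alpha> t + \<beta> t \<bullet> X \<omega> < Y \<omega>})"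
    by (rule Bochner_Integration.integral_cong[OF refl]) (use t in \<open>auto simp: indicator_def Uc_def ac_eq bc_eq\<close>)
  also have "\<dots> = prob {\<omega>\<in>space M. \<alpha> t + \<beta> t \<bullet> X \<omega> < Y \<omega>}"
    by simp
  also have "\<dots> = 1 - t" using PS t by simp
  finally show ?thesis .
qed

lemma V_orth:
  assumes V: "uniform01 M V" and C: "cond_exp_zero M X V"
  shows "integral\<^sup>L M (\<lambda>\<omega>. indicator {t<..} (V \<omega>) *\<^sub>R X \<omega>) = 0"
proof -
  have Vm[measurable]: "V \<in> borel_measurable M" using V unfolding uniform01_def by auto
  define F where "F = vimage_algebra (space M) V borel"
  interpret FS: finite_measure_subalgebra M F
    by (intro finite_measure_subalgebra.intro finite_measure_subalgebra_axioms.intro fm)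
       (simp add: F_def subalg_vimage)
  have comp: "integral\<^sup>L M (\<lambda>\<omega>. indicator {t<..} (V \<omega>) * X \<omega> $ i) = 0" for i
  proof -
    define A where "A = V -` {t<..} \<inter> space M"
    have A: "A \<in> sets F" unfolding A_def F_def by (rule in_vimage_algebra) simp
    have Xi: "integrable M (\<lambda>\<omega>. X \<omega> $ i)" using int_mult_Xi[of "\<lambda>_. 1" i] by simp
    have ae: "AE \<omega> in M. real_cond_exp M F (\<lambda>\<omega>. X \<omega> $ i) \<omega> = 0"
      using C unfolding cond_exp_zero_def F_def by simp
    have "integral\<^sup>L M (\<lambda>\<omega>. indicator {t<..} (V \<omega>) * X \<omega> $ i) = (\<integral>\<omega>\<in>A. X \<omega> $ i \<partial>M)"
      unfolding set_lebesgue_integral_def A_def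
      by (rule Bochner_Integration.integral_cong[OF refl]) (auto simp: indicator_def)
    also have "\<dots> = (\<integral>\<omega>\<in>A. real_cond_exp M F (\<lambda>\<omega>. X \<omega> $ i) \<omega> \<partial>M)"
      by (rule FS.real_cond_exp_intA[OF Xi A])
    also have "\<dots> = (\<integral>\<omega>\<in>A. 0 \<partial>M)"
      unfolding set_lebesgue_integral_def
    proof (rule integral_cong_AE)
      show "AE x in M. indicator A x *\<^sub>R real_cond_exp M F (\<lambda>\<omega>. X \<omega> $ i) x = indicator A x *\<^sub>R (0::real)"
        using ae by eventually_elim simp
      have "A \<in> sets M" unfolding A_def by measurable
      then show "(\<lambda>x. indicator A x *\<^sub>R real_cond_exp M F (\<lambda>\<omega>. X \<omega> $ i) x) \<in> borel_measurable M"
        by measurable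
    qed simp
    also have "\<dots> = 0" by (simp add: set_lebesgue_integral_def)
    finally show ?thesis .
  qed
  have i: "integrable M (\<lambda>\<omega>. indicator {t<..} (V \<omega>) *\<^sub>R X \<omega>)"
    by (rule int_scaleR_X) (auto simp: indicator_def)
  show ?thesis
    unfolding vec_eq_iff using comp_int[OF i] comp by simp
qed

lemma pointwise_opt:
  assumes V: "uniform01 M V" and C: "cond_exp_zero M X V" and t: "t \<in> {0..1}"
  shows "integral\<^sup>L M (\<lambda>\<omega>. indicator {t<..} (V \<omega>) * Y \<omega>) \<le> integral\<^sup>L M (\<lambda>\<omega>. Uc t \<omega> * Y \<omega>)"
proof -
  have Vm[measurable]: "V \<in> borel_measurable M" using V unfolding uniform01_def by auto
  define g where "g \<omega> = (indicator {t<..} (V \<omega>) :: real)" for \<omega>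
  define h where "h \<omega> = Uc t \<omega>" for \<omega>
  have gm: "g \<in> borel_measurable M" unfolding g_def by measurable
  have hm: "h \<in> borel_measurable M" unfolding h_def by measurable
  have gb: "\<bar>g \<omega>\<bar> \<le> 1" for \<omega> unfolding g_def by (simp add: indicator_def)
  have hb: "\<bar>h \<omega>\<bar> \<le> 1" for \<omega> unfolding h_def by (simp add: Uc_def)
  let ?a = "\<alpha> t" and ?b = "\<beta> t"
  have sg: "integral\<^sup>L M (\<lambda>\<omega>. g \<omega> * Y \<omega>) = integral\<^sup>L M (\<lambda>\<omega>. g \<omega> * (Y \<omega> - (?a + ?b \<bullet> X \<omega>))) + integral\<^sup>L M (\<lambda>\<omega>. g \<omega> * (?a + ?b \<bullet> X \<omega>))"
    by (rule split_int(2)[OF gm gb])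
  have sh: "integral\<^sup>L M (\<lambda>\<omega>. h \<omega> * Y \<omega>) = integral\<^sup>L M (\<lambda>\<omega>. h \<omega> * (Y \<omega> - (?a + ?b \<bullet> X \<omega>))) + integral\<^sup>L M (\<lambda>\<omega>. h \<omega> * (?a + ?b \<bullet> X \<omega>))"
    by (rule split_int(2)[OF hm hb])
  have lg: "integral\<^sup>L M (\<lambda>\<omega>. g \<omega> * (?a + ?b \<bullet> X \<omega>)) = ?a * (1 - t)"
    using lin_int(2)[OF gm gb, of ?a ?b] V_orth[OF V C, of t] ind_V_int[of t V] V_prob_gt[OF V t]
    by (simp add: g_def)
  have lh: "integral\<^sup>L M (\<lambda>\<omega>. h \<omega> * (?a + ?b \<bullet> X \<omega>)) = ?a * (1 - t)"
    using lin_int(2)[OF hm hb, of ?a ?b] orth_Uc[OF t] Uc_int_M[OF t]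
    by (simp add: h_def)
  have mono: "integral\<^sup>L M (\<lambda>\<omega>. g \<omega> * (Y \<omega> - (?a + ?b \<bullet> X \<omega>))) \<le> integral\<^sup>L M (\<lambda>\<omega>. h \<omega> * (Y \<omega> - (?a + ?b \<bullet> X \<omega>)))"
  proof (rule integral_mono[OF split_int(1)[OF gm gb] split_int(1)[OF hm hb]])
    fix \<omega> assume "\<omega> \<in> space M"
    show "g \<omega> * (Y \<omega> - (?a + ?b \<bullet> X \<omega>)) \<le> h \<omega> * (Y \<omega> - (?a + ?b \<bullet> X \<omega>))"
    proof (cases "?a + ?b \<bullet> X \<omega> < Y \<omega>")
      case True
      then have "h \<omega> = 1" using t by (simp add: h_def Uc_def ac_eq bc_eq)
      moreover have "g \<omega> \<le> 1" using gb[of \<omega>] by simp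
      ultimately show ?thesis using True by (simp add: mult_left_le_one_le)
    next
      case False
      then have "h \<omega> = 0" using t by (simp add: h_def Uc_def ac_eq bc_eq)
      moreover have "0 \<le> g \<omega>" by (simp add: g_def)
      ultimately show ?thesis using False by (simp add: mult_nonneg_nonpos)
    qed
  qed
  show ?thesis using sg sh lg lh mono by (simp add: g_def h_def)
qed

lemma p_LM: "(\<lambda>p. (fst p, snd p)) \<in> measurable (L \<Otimes>\<^sub>M M) (borel \<Otimes>\<^sub>M M)"
  by (intro measurable_Pair fst_meas measurable_snd)

lemma toLM: "h \<in> borel_measurable (borel \<Otimes>\<^sub>M M) \<Longrightarrow> h \<in> borel_measurable (L \<Otimes>\<^sub>M M)"
  using measurable_comp[OF p_LM] by (simp add: comp_def)

lemma p_ML: "(\<lambda>p. (fst p, snd p)) \<in> measurable (M \<Otimes>\<^sub>M L) (M \<Otimes>\<^sub>M borel)"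
  by (intro measurable_Pair snd_meas measurable_fst)

lemma toML: "h \<in> borel_measurable (M \<Otimes>\<^sub>M borel) \<Longrightarrow> h \<in> borel_measurable (M \<Otimes>\<^sub>M L)"
  using measurable_comp[OF p_ML] by (simp add: comp_def)

lemma pair_LM: "pair_sigma_finite L M"
  by (intro pair_sigma_finite.intro prob_space_imp_sigma_finite L_prob prob_space_axioms)

lemma fLM: "finite_measure (L \<Otimes>\<^sub>M M)"
  by (rule finite_measure_pair_measure[OF fm]) (use L_prob in \<open>simp add: prob_space_def\<close>)

lemma V_01_AE:
  assumes V: "uniform01 M V"
  shows "AE \<omega> in M. V \<omega> \<in> {0..1}"
proof -
  have Vm[measurable]: "V \<in> borel_measurable M" and D: "distr M lborel V = uniform_measure lborel {0..1}"
    using V unfolding uniform01_def by auto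
  show ?thesis
  proof (subst AE_iff_measurable[OF _ refl])
    show "{\<omega>\<in>space M. \<not> V \<omega> \<in> {0..1}} \<in> sets M" by measurable
    have "{\<omega>\<in>space M. \<not> V \<omega> \<in> {0..1}} = V -` (- {0..1}) \<inter> space M" by auto
    also have "emeasure M \<dots> = emeasure (distr M lborel V) (- {0..1})"
      by (rule emeasure_distr[symmetric]) simp_all
    also have "\<dots> = 0" unfolding D by simp
    finally show "emeasure M {\<omega>\<in>space M. \<not> V \<omega> \<in> {0..1}} = 0" .
  qed
qed

lemma opt_main:
  assumes V: "uniform01 M V" and C: "cond_exp_zero M X V"
  shows "integral\<^sup>L M (\<lambda>\<omega>. V \<omega> * Y \<omega>) \<le> integral\<^sup>L M (\<lambda>\<omega>. U \<omega> * Y \<omega>)"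
proof -
  have Vm[measurable]: "V \<in> borel_measurable M" using V unfolding uniform01_def by auto
  obtain BY where BY: "\<forall>\<omega>\<in>space M. \<bar>Y \<omega>\<bar> \<le> BY" using Yb by blast
  interpret L: prob_space L by (rule L_prob)
  interpret P: pair_sigma_finite L M by (rule pair_LM)
  interpret FP: finite_measure "L \<Otimes>\<^sub>M M" by (rule fLM)
  define G where "G t \<omega> = (if t < V \<omega> then Y \<omega> else 0)" for t \<omega>
  define H where "H t \<omega> = Uc t \<omega> * Y \<omega>" for t \<omega>
  have cG: "case_prod G = (\<lambda>p. G (fst p) (snd p))" by (rule ext) auto
  have cH: "case_prod H = (\<lambda>p. H (fst p) (snd p))" by (rule ext) auto
  have Gm: "(\<lambda>p. G (fst p) (snd p)) \<in> borel_measurable (L \<Otimes>\<^sub>M M)"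
    unfolding G_def
  proof (rule toLM, rule measurable_If)
    show "{p\<in>space (borel \<Otimes>\<^sub>M M). fst p < V (snd p)} \<in> sets (borel \<Otimes>\<^sub>M M)" by measurable
  qed measurable
  have Gm2: "(\<lambda>p. G (snd p) (fst p)) \<in> borel_measurable (M \<Otimes>\<^sub>M L)"
    unfolding G_def
  proof (rule toML, rule measurable_If)
    show "{p\<in>space (M \<Otimes>\<^sub>M borel). snd p < V (fst p)} \<in> sets (M \<Otimes>\<^sub>M borel)" by measurable
  qed measurable
  have Hm: "(\<lambda>p. H (fst p) (snd p)) \<in> borel_measurable (L \<Otimes>\<^sub>M M)"
    unfolding H_def by (intro borel_measurable_times Uc_meas measurable_compose[OF measurable_snd Ym])
  have Gi: "integrable (L \<Otimes>\<^sub>M M) (case_prod G)" unfolding cG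
  proof (rule FP.integrable_const_bound[where B=BY])
    show "AE p in L \<Otimes>\<^sub>M M. norm (G (fst p) (snd p)) \<le> BY"
      by (rule AE_I2) (use BY in \<open>auto simp: G_def space_pair_measure\<close>)
  qed (rule Gm)
  have Hi: "integrable (L \<Otimes>\<^sub>M M) (case_prod H)" unfolding cH
  proof (rule FP.integrable_const_bound[where B=BY])
    show "AE p in L \<Otimes>\<^sub>M M. norm (H (fst p) (snd p)) \<le> BY"
    proof (rule AE_I2)
      fix p assume "p \<in> space (L \<Otimes>\<^sub>M M)"
      then have "snd p \<in> space M" by (auto simp: space_pair_measure)
      then have "\<bar>Y (snd p)\<bar> \<le> BY" using BY by auto
      then show "norm (H (fst p) (snd p)) \<le> BY" by (auto simp: H_def Uc_def)
    qed
  qed (rule Hm)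
  have innerG: "integral\<^sup>L L (\<lambda>t. G t \<omega>) = V \<omega> * Y \<omega>" if v: "V \<omega> \<in> {0..1}" for \<omega>
  proof -
    have "integral\<^sup>L L (\<lambda>t. G t \<omega>) = integral\<^sup>L L (\<lambda>t. indicator {0..<V \<omega>} t * Y \<omega>)"
      by (rule Bochner_Integration.integral_cong[OF refl]) (auto simp: G_def indicator_def)
    also have "\<dots> = measure L ({0..<V \<omega>} \<inter> {0..1}) * Y \<omega>" by simp
    also have "{0..<V \<omega>} \<inter> {0..1} = {0..<V \<omega>}" using v by auto
    also have "measure L {0..<V \<omega>} = V \<omega>" by (rule measL_atLeastLessThan[OF v])
    finally show ?thesis .
  qed
  have innerH: "integral\<^sup>L L (\<lambda>t. H t \<omega>) = U \<omega> * Y \<omega>" for \<omega>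
    by (simp add: H_def U_eq)
  have "integral\<^sup>L M (\<lambda>\<omega>. V \<omega> * Y \<omega>) = integral\<^sup>L M (\<lambda>\<omega>. integral\<^sup>L L (\<lambda>t. G t \<omega>))"
  proof (rule integral_cong_AE)
    show "AE \<omega> in M. V \<omega> * Y \<omega> = integral\<^sup>L L (\<lambda>t. G t \<omega>)"
      using V_01_AE[OF V] by eventually_elim (simp add: innerG)
    show "(\<lambda>\<omega>. integral\<^sup>L L (\<lambda>t. G t \<omega>)) \<in> borel_measurable M"
      by (rule L.borel_measurable_lebesgue_integral) (simp add: Gm2[unfolded case_prod_beta'] case_prod_beta')
  qed measurable
  also have "\<dots> = integral\<^sup>L L (\<lambda>t. integral\<^sup>L M (\<lambda>\<omega>. G t \<omega>))"
    by (rule P.Fubini_integral[OF Gi])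
  also have "\<dots> \<le> integral\<^sup>L L (\<lambda>t. integral\<^sup>L M (\<lambda>\<omega>. H t \<omega>))"
  proof (rule integral_mono)
    show "integrable L (\<lambda>t. integral\<^sup>L M (\<lambda>\<omega>. G t \<omega>))"
      using P.integrable_fst'[OF Gi] by simp
    show "integrable L (\<lambda>t. integral\<^sup>L M (\<lambda>\<omega>. H t \<omega>))"
      using P.integrable_fst'[OF Hi] by simp
    fix t assume "t \<in> space L"
    then have t: "t \<in> {0..1}" by simp
    have "integral\<^sup>L M (\<lambda>\<omega>. G t \<omega>) = integral\<^sup>L M (\<lambda>\<omega>. indicator {t<..} (V \<omega>) * Y \<omega>)"
      by (rule Bochner_Integration.integral_cong[OF refl]) (auto simp: G_def indicator_def)
    also have "\<dots> \<le> integral\<^sup>L M (\<lambda>\<omega>. Uc t \<omega> * Y \<omega>)" by (rule pointwise_opt[OF V C t])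
    finally show "integral\<^sup>L M (\<lambda>\<omega>. G t \<omega>) \<le> integral\<^sup>L M (\<lambda>\<omega>. H t \<omega>)" by (simp add: H_def)
  qed
  also have "\<dots> = integral\<^sup>L M (\<lambda>\<omega>. integral\<^sup>L L (\<lambda>t. H t \<omega>))"
    by (rule P.Fubini_integral[OF Hi, symmetric])
  also have "\<dots> = integral\<^sup>L M (\<lambda>\<omega>. U \<omega> * Y \<omega>)" by (simp add: innerH)
  finally show ?thesis .
qed
end

theorem mainTheorem7:
  fixes M :: "'a measure" and X :: "'a \<Rightarrow> real ^ 'n" and Y :: "'a \<Rightarrow> real"
    and \<alpha> :: "real \<Rightarrow> real" and \<beta> :: "real \<Rightarrow> real ^ 'n"
  assumes "prob_space M"
    and "X \<in> borel_measurable M" and "Y \<in> borel_measurable M"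
    and "\<exists>B. \<forall>\<omega>\<in>space M. norm (X \<omega>) \<le> B"
    and "\<exists>B. \<forall>\<omega>\<in>space M. \<bar>Y \<omega>\<bar> \<le> B"
    and "integral\<^sup>L M X = 0"
    and "\<forall>a b. measure M {\<omega>\<in>space M. Y \<omega> = a + b \<bullet> X \<omega>} = 0"
    and "continuous_on {0..1} \<alpha>" and "continuous_on {0..1} \<beta>"
    and "\<forall>t\<in>{0..1}. measure M {\<omega>\<in>space M. Y \<omega> > \<alpha> t + \<beta> t \<bullet> X \<omega>} = 1 - t"
    and "\<forall>t\<in>{0..1}. integral\<^sup>L M (\<lambda>\<omega>. QR_Ut \<alpha> \<beta> X Y t \<omega> *\<^sub>R X \<omega>) = 0"
    and "AE x in distr M borel X. mono_on {0..1} (\<lambda>t. \<alpha> t + \<beta> t \<bullet> x)"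
  shows "uniform01 M (QR_U \<alpha> \<beta> X Y)
    \<and> cond_exp_zero M X (QR_U \<alpha> \<beta> X Y)
    \<and> (AE \<omega> in M. Y \<omega> = \<alpha> (QR_U \<alpha> \<beta> X Y \<omega>) + \<beta> (QR_U \<alpha> \<beta> X Y \<omega>) \<bullet> X \<omega>)
    \<and> (\<forall>V. uniform01 M V \<and> cond_exp_zero M X V \<longrightarrow>
           integral\<^sup>L M (\<lambda>\<omega>. V \<omega> * Y \<omega>) \<le> integral\<^sup>L M (\<lambda>\<omega>. QR_U \<alpha> \<beta> X Y \<omega> * Y \<omega>))"
proof -
  have "qr M X Y \<alpha> \<beta>"
    unfolding qr_def qr_axioms_def using assms by auto
  then interpret Q: qr M X Y \<alpha> \<beta> .
  show ?thesis
    using Q.U_uniform Q.U_cond Q.Y_eq_AE Q.opt_main unfolding Q.U_def by blast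
qed

end
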